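(* Let $f$ be a non-trivial ABC voting rule that satisfies anonymity, neutrality, consistency, continuity, and independence of losers. Then there is a ballot size $r\in\{1,\dots,m-1\}$ such that $f(A^{x,r})=\{W\in\mathcal W_k:x\in W\}$ and $f(A^{-x,r})=\{W\in\mathcal W_k:x\notin W\}$ for all candidates $x\in\mathcal C$.
   Context: Let $\mathcal C=\{c_1,\dots,c_m\}$ be a set of $m\ge 2$ candidates and $\mathbb N=\{1,2,\dots\}$ the set of potential voters. An approval ballot is a non-empty subset of $\mathcal C$; $\mathcal A$ is the set of all ballots. A profile is a map $A:N_A\to\mathcal A$ for a non-empty finite electorate $N_A\subseteq\mathbb N$; $\mathcal A^*$ is the set of profiles. For disjoint electorates $A+A'$ is the union profile, and $\lambda A$ consists of $\lambda$ copies of $A$ on disjoint voter sets. Fix $k\in\{1,\dots,m-1\}$; $\mathcal W_k$ is the set of $k$-element subsets of $\mathcal C$. An ABC voting rule is a map $f:\mathcal A^*\to2^{\mathcal W_k}\setminus\{\emptyset\}$; it is trivial if $f(A)=\mathcal W_k$ for every profile $A$, and non-trivial otherwise. Anonymity: invariance under renaming voters. Neutrality: $f(\tau(A))=\{\tau(W):W\in f(A)\}$ for every permutation $\tau$ of $\mathcal C$ ($\tau(A)_i=\tau(A_i)$). Consistency: $f(A+A')=f(A)\cap f(A')$ for disjoint $A,A'$ with non-empty intersection of outcomes. Continuity: for all $A,A'$ there is $\lambda\in\mathbb N$ with $f(\lambda A+A')\subseteq f(A)$. Independence of losers: $W\in f(A)$ implies $W\in f(A')$ whenever $N_A=N_{A'}$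 and, for all voters $i$, $A'_i\subseteq A_i$ and $W\cap A'_i=W\cap A_i$. For $x\in\mathcal C$ and $r\in\{1,\dots,m\}$, $A^{x,r}$ is the profile in which every ballot $S\in\mathcal A$ with $|S|=r$ and $x\in S$ is reported by exactly one voter (and no other ballots appear), and $A^{-x,r}$ is the profile in which every ballot $S$ with $|S|=r$ and $x\notin S$ is reported by exactly one voter. *)

theory Defs
  imports Main
begin

text \<open>Candidates form a finite type 'c (m = CARD('c)); potential voters are the
positive naturals. A profile is a partial map from voters to ballots.\<close>

type_synonym 'c profile = "nat \<Rightarrow> 'c set option"

definition is_profile :: "'c profile \<Rightarrow> bool" where
  "is_profile A \<longleftrightarrow> finite (dom A) \<and> dom A \<noteq> {} \<and> 0 \<notin> dom A \<and>
     (\<forall>i\<in>dom A. the (A i) \<noteq> {})"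

definition committees :: "nat \<Rightarrow> 'c set set" where
  "committees k = {W. card W = k}"

definition abc_rule :: "nat \<Rightarrow> ('c profile \<Rightarrow> 'c set set) \<Rightarrow> bool" where
  "abc_rule k f \<longleftrightarrow> (\<forall>A. is_profile A \<longrightarrow> f A \<noteq> {} \<and> f A \<subseteq> committees k)"

definition trivial_rule :: "nat \<Rightarrow> ('c profile \<Rightarrow> 'c set set) \<Rightarrow> bool" where
  "trivial_rule k f \<longleftrightarrow> (\<forall>A. is_profile A \<longrightarrow> f A = committees k)"

definition anonymous :: "('c profile \<Rightarrow> 'c set set) \<Rightarrow> bool" where
  "anonymous f \<longleftrightarrow> (\<forall>A A' \<pi>. is_profile A \<and> is_profile A' \<and> bij_betw \<pi> (dom A) (dom A') \<and>
      (\<forall>i\<in>dom A. A' (\<pi> i) = A i) \<longrightarrow> f A' = f A)"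

definition neutral :: "('c profile \<Rightarrow> 'c set set) \<Rightarrow> bool" where
  "neutral f \<longleftrightarrow> (\<forall>A \<tau>. is_profile A \<and> bij \<tau> \<longrightarrow>
      f (\<lambda>i. map_option (\<lambda>S. \<tau> ` S) (A i)) = (\<lambda>W. \<tau> ` W) ` f A)"

definition consistent :: "('c profile \<Rightarrow> 'c set set) \<Rightarrow> bool" where
  "consistent f \<longleftrightarrow> (\<forall>A A'. is_profile A \<and> is_profile A' \<and> dom A \<inter> dom A' = {} \<and>
      f A \<inter> f A' \<noteq> {} \<longrightarrow> f (A ++ A') = f A \<inter> f A')"

definition copies :: "nat \<Rightarrow> 'c profile \<Rightarrow> 'c profile \<Rightarrow> bool" where
  "copies n A B \<longleftrightarrow> is_profile B \<and> (\<exists>g :: nat \<Rightarrow> nat \<Rightarrow> nat.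
      (\<forall>j<n. inj_on (g j) (dom A)) \<and>
      (\<forall>j<n. \<forall>j'<n. j \<noteq> j' \<longrightarrow> g j ` dom A \<inter> g j' ` dom A = {}) \<and>
      dom B = (\<Union>j<n. g j ` dom A) \<and>
      (\<forall>j<n. \<forall>i\<in>dom A. B (g j i) = A i))"

definition continuous_rule :: "('c profile \<Rightarrow> 'c set set) \<Rightarrow> bool" where
  "continuous_rule f \<longleftrightarrow> (\<forall>A A'. is_profile A \<and> is_profile A' \<longrightarrow>
      (\<exists>n\<ge>1. \<forall>B. copies n A B \<and> dom B \<inter> dom A' = {} \<longrightarrow> f (B ++ A') \<subseteq> f A))"

definition indep_losers :: "('c profile \<Rightarrow> 'c set set) \<Rightarrow> bool" where
  "indep_losers f \<longleftrightarrow> (\<forall>A A' W. is_profile A \<and> is_profile A' \<and> dom A = dom A' \<and>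
      (\<forall>i\<in>dom A. the (A' i) \<subseteq> the (A i) \<and> W \<inter> the (A' i) = W \<inter> the (A i)) \<and>
      W \<in> f A \<longrightarrow> W \<in> f A')"

text \<open>A is (a realisation of) the profile in which each ballot in the set X is
reported by exactly one voter and no other ballots appear.\<close>
definition each_once :: "'c set set \<Rightarrow> 'c profile \<Rightarrow> bool" where
  "each_once X A \<longleftrightarrow> is_profile A \<and> bij_betw (\<lambda>i. the (A i)) (dom A) X"

definition prof_with :: "'c \<Rightarrow> nat \<Rightarrow> 'c profile \<Rightarrow> bool" where
  "prof_with x r A \<longleftrightarrow> each_once {S. card S = r \<and> x \<in> S} A"

definition prof_without :: "'c \<Rightarrow> nat \<Rightarrow> 'c profile \<Rightarrow> bool" where
  "prof_without x r A \<longleftrightarrow> each_once {S. card S = r \<and> x \<notin> S} A"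

end

theory Submission
  imports Defs
begin


definition pmap :: "('c \<Rightarrow> 'c) \<Rightarrow> 'c profile \<Rightarrow> 'c profile" where
  "pmap \<tau> A = (\<lambda>i. map_option (\<lambda>S. \<tau> ` S) (A i))"

lemma ex_perm3:
  fixes A B A' B' :: "'c::finite set"
  assumes "A \<inter> B = {}" "A' \<inter> B' = {}" "card A = card A'" "card B = card B'"
  shows "\<exists>\<tau>. bij \<tau> \<and> \<tau> ` A = A' \<and> \<tau> ` B = B'"
proof -
  let ?C = "- (A \<union> B)" let ?C' = "- (A' \<union> B')"
  have cu: "card (A \<union> B) = card (A' \<union> B')"
    using assms by (simp add: card_Un_disjoint)
  have "card ?C = card ?C'" using cu by (simp add: Compl_eq_Diff_UNIV card_Diff_subset)
  then obtain j where j: "bij_betw j ?C ?C'" using finite_same_card_bij[of ?C ?C'] by auto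
  obtain g where g: "bij_betw g A A'" using finite_same_card_bij[of A A'] assms(3) by auto
  obtain h where h: "bij_betw h B B'" using finite_same_card_bij[of B B'] assms(4) by auto
  define \<tau> where "\<tau> y = (if y \<in> A then g y else if y \<in> B then h y else j y)" for y
  have 1: "bij_betw \<tau> A A'"
  proof -
    have "bij_betw \<tau> A A' = bij_betw g A A'" by (rule bij_betw_cong) (simp add: \<tau>_def)
    thus ?thesis using g by simp
  qed
  have 2: "bij_betw \<tau> B B'"
  proof -
    have "bij_betw \<tau> B B' = bij_betw h B B'" by (rule bij_betw_cong) (use assms(1) in \<open>auto simp: \<tau>_def\<close>)
    thus ?thesis using h by simp
  qed
  have 3: "bij_betw \<tau> ?C ?C'"
  proof -
    have "bij_betw \<tau> ?C ?C' = bij_betw j ?C ?C'" by (rule bij_betw_cong) (simp add: \<tau>_def)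
    thus ?thesis using j by simp
  qed
  have d: "(A' \<union> B') \<inter> ?C' = {}" by blast
  have "bij_betw \<tau> (A \<union> B \<union> ?C) (A' \<union> B' \<union> ?C')"
    by (rule bij_betw_combine[OF bij_betw_combine[OF 1 2 assms(2)] 3 d])
  moreover have "A \<union> B \<union> ?C = UNIV" "A' \<union> B' \<union> ?C' = UNIV" by auto
  ultimately have "bij \<tau>" by simp
  moreover have "\<tau> ` A = A'" using 1 by (simp add: bij_betw_imp_surj_on)
  moreover have "\<tau> ` B = B'" using 2 by (simp add: bij_betw_imp_surj_on)
  ultimately show ?thesis by blast
qed

lemma image_Xw:
  fixes \<tau> :: "'c::finite \<Rightarrow> 'c"
  assumes "bij \<tau>"
  shows "(\<lambda>S. \<tau> ` S) ` {S. card S = r \<and> x \<in> S} = {S. card S = r \<and> \<tau> x \<in> S}"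
proof
  have inj: "inj \<tau>" using assms bij_is_inj by blast
  show "(\<lambda>S. \<tau> ` S) ` {S. card S = r \<and> x \<in> S} \<subseteq> {S. card S = r \<and> \<tau> x \<in> S}"
    using inj by (auto simp: card_image inj_on_subset)
  show "{S. card S = r \<and> \<tau> x \<in> S} \<subseteq> (\<lambda>S. \<tau> ` S) ` {S. card S = r \<and> x \<in> S}"
  proof
    fix S assume S: "S \<in> {S. card S = r \<and> \<tau> x \<in> S}"
    have e: "S = \<tau> ` (\<tau> -` S)" using assms by (simp add: bij_is_surj surj_image_vimage_eq)
    have "card (\<tau> -` S) = r" using S e card_image[OF inj_on_subset[OF inj subset_UNIV, of "\<tau> -` S"]] by simp
    moreover have "x \<in> \<tau> -` S" using S by simp
    ultimately show "S \<in> (\<lambda>S. \<tau> ` S) ` {S. card S = r \<and> x \<in> S}" using e by blast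
  qed
qed

lemma image_Xall:
  fixes \<tau> :: "'c::finite \<Rightarrow> 'c"
  assumes "bij \<tau>"
  shows "(\<lambda>S. \<tau> ` S) ` {S::'c set. card S = r} = {S. card S = r}"
proof
  have inj: "inj \<tau>" using assms bij_is_inj by blast
  show "(\<lambda>S. \<tau> ` S) ` {S. card S = r} \<subseteq> {S. card S = r}"
    using inj by (auto simp: card_image inj_on_subset)
  show "{S. card S = r} \<subseteq> (\<lambda>S. \<tau> ` S) ` {S. card S = r}"
  proof
    fix S :: "'c set" assume S: "S \<in> {S. card S = r}"
    have e: "S = \<tau> ` (\<tau> -` S)" using assms by (simp add: bij_is_surj surj_image_vimage_eq)
    have "card (\<tau> -` S) = r" using S e card_image[OF inj_on_subset[OF inj subset_UNIV, of "\<tau> -` S"]] by simp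
    thus "S \<in> (\<lambda>S. \<tau> ` S) ` {S. card S = r}" using e by blast
  qed
qed

lemma image_Xo:
  fixes \<tau> :: "'c::finite \<Rightarrow> 'c"
  assumes "bij \<tau>"
  shows "(\<lambda>S. \<tau> ` S) ` {S. card S = r \<and> x \<notin> S} = {S. card S = r \<and> \<tau> x \<notin> S}"
proof -
  have inj: "inj \<tau>" using assms bij_is_inj by blast
  have ii: "inj (\<lambda>S. \<tau> ` S)" using inj by (simp add: inj_def inj_image_eq_iff)
  have "{S. card S = r \<and> x \<notin> S} = {S. card S = r} - {S. card S = r \<and> x \<in> S}" by auto
  hence "(\<lambda>S. \<tau> ` S) ` {S. card S = r \<and> x \<notin> S} = (\<lambda>S. \<tau> ` S) ` {S. card S = r} - (\<lambda>S. \<tau> ` S) ` {S. card S = r \<and> x \<in> S}"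
    using ii by (simp add: image_set_diff)
  also have "\<dots> = {S. card S = r} - {S. card S = r \<and> \<tau> x \<in> S}"
    using image_Xall[OF assms] image_Xw[OF assms] by simp
  also have "\<dots> = {S. card S = r \<and> \<tau> x \<notin> S}" by auto
  finally show ?thesis .
qed

lemma each_once_pmap:
  assumes "bij \<tau>" "each_once X A"
  shows "each_once ((\<lambda>S. \<tau> ` S) ` X) (pmap \<tau> A)"
proof -
  have dom: "dom (pmap \<tau> A) = dom A" by (auto simp: pmap_def)
  have inj: "inj \<tau>" using assms bij_is_inj by blast
  have prof: "is_profile (pmap \<tau> A)"
  proof -
    have "is_profile A" using assms(2) by (simp add: each_once_def)
    moreover have "the (pmap \<tau> A i) = \<tau> ` the (A i)" if "i \<in> dom A" for i
      using that by (auto simp: pmap_def)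
    ultimately show ?thesis using dom unfolding is_profile_def by simp
  qed
  have b1: "bij_betw (\<lambda>i. the (A i)) (dom A) X" using assms(2) by (simp add: each_once_def)
  have b2: "bij_betw (\<lambda>S. \<tau> ` S) X ((\<lambda>S. \<tau> ` S) ` X)"
    using inj by (auto simp: bij_betw_def inj_on_def inj_image_eq_iff)
  have "bij_betw ((\<lambda>S. \<tau> ` S) \<circ> (\<lambda>i. the (A i))) (dom A) ((\<lambda>S. \<tau> ` S) ` X)"
    by (rule bij_betw_trans[OF b1 b2])
  hence "bij_betw (\<lambda>i. the (pmap \<tau> A i)) (dom (pmap \<tau> A)) ((\<lambda>S. \<tau> ` S) ` X)"
  proof -
    have "bij_betw (\<lambda>i. the (pmap \<tau> A i)) (dom A) ((\<lambda>S. \<tau> ` S) ` X) = 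
          bij_betw ((\<lambda>S. \<tau> ` S) \<circ> (\<lambda>i. the (A i))) (dom A) ((\<lambda>S. \<tau> ` S) ` X)"
      by (rule bij_betw_cong) (auto simp: pmap_def)
    thus ?thesis using \<open>bij_betw ((\<lambda>S. \<tau> ` S) \<circ> (\<lambda>i. the (A i))) (dom A) ((\<lambda>S. \<tau> ` S) ` X)\<close> dom by simp
  qed
  thus ?thesis using prof by (simp add: each_once_def)
qed

lemma each_once_same:
  assumes an: "anonymous f" and A: "each_once X A" and B: "each_once X B"
  shows "f A = f B"
proof -
  have a: "bij_betw (\<lambda>i. the (A i)) (dom A) X" and b: "bij_betw (\<lambda>i. the (B i)) (dom B) X"
    using A B by (auto simp: each_once_def)
  define \<pi> where "\<pi> = inv_into (dom B) (\<lambda>i. the (B i)) \<circ> (\<lambda>i. the (A i))"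
  have bp: "bij_betw \<pi> (dom A) (dom B)" unfolding \<pi>_def
    by (rule bij_betw_trans[OF a bij_betw_inv_into[OF b]])
  have "B (\<pi> i) = A i" if i: "i \<in> dom A" for i
  proof -
    have "\<pi> i \<in> dom B" using bp i by (metis bij_betwE)
    moreover have "the (B (\<pi> i)) = the (A i)" unfolding \<pi>_def
      using a b i by (simp add: bij_betw_def f_inv_into_f image_eqI)
         (metis (no_types, lifting) f_inv_into_f image_eqI)
    ultimately show ?thesis using i by (metis domD option.sel)
  qed
  hence "f B = f A" 
    apply -
    apply (rule an[unfolded anonymous_def, rule_format, of A B \<pi>])
    using A B bp unfolding each_once_def by simp
  thus ?thesis by simp
qed



definition shr :: "('c set \<Rightarrow> 'c set) \<Rightarrow> 'c profile \<Rightarrow> 'c profile" where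
  "shr g A = (\<lambda>i. map_option g (A i))"

lemma dom_shr[simp]: "dom (shr g A) = dom A" by (auto simp: shr_def)
lemma the_shr: "i \<in> dom A \<Longrightarrow> the (shr g A i) = g (the (A i))" by (auto simp: shr_def)

lemma each_once_map:
  assumes "each_once X A" "bij_betw g X Y" "{} \<notin> Y"
  shows "each_once Y (shr g A)"
proof -
  have pA: "is_profile A" and b1: "bij_betw (\<lambda>i. the (A i)) (dom A) X"
    using assms(1) by (auto simp: each_once_def)
  have b: "bij_betw (g \<circ> (\<lambda>i. the (A i))) (dom A) Y" by (rule bij_betw_trans[OF b1 assms(2)])
  have "bij_betw (\<lambda>i. the (shr g A i)) (dom A) Y = bij_betw (g \<circ> (\<lambda>i. the (A i))) (dom A) Y"
    by (rule bij_betw_cong) (simp add: the_shr)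
  hence b': "bij_betw (\<lambda>i. the (shr g A i)) (dom (shr g A)) Y" using b by simp
  have "the (shr g A i) \<noteq> {}" if "i \<in> dom A" for i
  proof -
    have "the (shr g A i) \<in> Y" using b' that by (metis bij_betwE dom_shr)
    thus ?thesis using assms(3) by auto
  qed
  hence "is_profile (shr g A)" using pA unfolding is_profile_def by simp
  thus ?thesis using b' by (simp add: each_once_def)
qed

lemma each_once_restrict:
  assumes "each_once X C" "Y \<subseteq> X" "Y \<noteq> {}"
  shows "each_once Y (C |` {i. the (C i) \<in> Y})"
proof -
  let ?D = "{i. the (C i) \<in> Y}"
  have pC: "is_profile C" and b: "bij_betw (\<lambda>i. the (C i)) (dom C) X"
    using assms(1) by (auto simp: each_once_def)
  have dom: "dom (C |` ?D) = dom C \<inter> ?D" by simp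
  have inj: "inj_on (\<lambda>i. the (C i)) (dom C \<inter> ?D)"
    using b by (meson bij_betw_def inj_on_subset inf_le1)
  have img: "(\<lambda>i. the (C i)) ` (dom C \<inter> ?D) = Y"
  proof
    show "(\<lambda>i. the (C i)) ` (dom C \<inter> ?D) \<subseteq> Y" by auto
    show "Y \<subseteq> (\<lambda>i. the (C i)) ` (dom C \<inter> ?D)"
    proof
      fix y assume y: "y \<in> Y"
      then have "y \<in> (\<lambda>i. the (C i)) ` dom C" using b assms(2) by (auto simp: bij_betw_def)
      then obtain i where "i \<in> dom C" "y = the (C i)" by blast
      thus "y \<in> (\<lambda>i. the (C i)) ` (dom C \<inter> ?D)" using y by auto
    qed
  qed
  have b0: "bij_betw (\<lambda>i. the (C i)) (dom C \<inter> ?D) Y" using inj img by (simp add: bij_betw_def)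
  have "bij_betw (\<lambda>i. the ((C |` ?D) i)) (dom C \<inter> ?D) Y = bij_betw (\<lambda>i. the (C i)) (dom C \<inter> ?D) Y"
    by (rule bij_betw_cong) simp
  hence b': "bij_betw (\<lambda>i. the ((C |` ?D) i)) (dom (C |` ?D)) Y" using b0 dom by simp
  have "dom C \<inter> ?D \<noteq> {}" using img assms(3) by auto
  hence "is_profile (C |` ?D)" using pC dom unfolding is_profile_def by auto
  thus ?thesis using b' by (simp add: each_once_def)
qed

lemma sv_dom[simp]: "dom [i \<mapsto> S] = {i}" by simp

lemma sv_profile: "0 < i \<Longrightarrow> S \<noteq> {} \<Longrightarrow> is_profile [i \<mapsto> S]"
  by (simp add: is_profile_def)

lemma sv_anon:
  assumes an: "anonymous f" and "0 < i" "0 < j" "S \<noteq> {}"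
  shows "f [i \<mapsto> S] = f [j \<mapsto> S]"
proof -
  have "bij_betw (\<lambda>_. i) {j} {i}" by (simp add: bij_betw_def)
  hence "f [i \<mapsto> S] = f [j \<mapsto> S]"
    apply -
    apply (rule an[unfolded anonymous_def, rule_format, of "[j \<mapsto> S]" "[i \<mapsto> S]" "\<lambda>_. i"])
    using assms by (simp add: sv_profile)
  thus ?thesis .
qed

lemma cons_singles:
  assumes cons: "consistent f" and P: "is_profile P" and W: "\<forall>i\<in>dom P. W' \<in> f [i \<mapsto> the (P i)]"
  shows "f P = (\<Inter>i\<in>dom P. f [i \<mapsto> the (P i)])"
proof -
  have fin: "finite (dom P)" "dom P \<noteq> {}" using P by (auto simp: is_profile_def)
  have "\<forall>P. dom P = D \<longrightarrow> is_profile P \<longrightarrow> (\<forall>i\<in>dom P. W' \<in> f [i \<mapsto> the (P i)]) \<longrightarrow>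
          f P = (\<Inter>i\<in>dom P. f [i \<mapsto> the (P i)])" if "finite D" "D \<noteq> {}" for D
    using that
  proof (induction D rule: finite_ne_induct)
    case (singleton a)
    show ?case
    proof (intro allI impI)
      fix P :: "'a profile" assume d: "dom P = {a}"
      have "P = [a \<mapsto> the (P a)]"
      proof (rule ext)
        fix i
        show "P i = [a \<mapsto> the (P a)] i"
        proof (cases "i = a")
          case True
          have "a \<in> dom P" using d by simp
          then obtain y where "P a = Some y" by blast
          then show ?thesis using True by simp
        next
          case False
          have "i \<notin> dom P" using d False by simp
          then have "P i = None" by blast
          then show ?thesis using False by simp
        qed
      qed
      hence "f P = f [a \<mapsto> the (P a)]" by (rule arg_cong)
      thus "f P = (\<Inter>i\<in>dom P. f [i \<mapsto> the (P i)])" using d by simp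
    qed
  next
    case (insert a D)
    show ?case
    proof (intro allI impI)
      fix P :: "'a profile" assume d: "dom P = insert a D" and pP: "is_profile P"
        and w: "\<forall>i\<in>dom P. W' \<in> f [i \<mapsto> the (P i)]"
      let ?P' = "P |` D"
      have d': "dom ?P' = D" using d by auto
      have pP': "is_profile ?P'" using pP d' insert(2) d unfolding is_profile_def by auto
      have w': "\<forall>i\<in>dom ?P'. W' \<in> f [i \<mapsto> the (?P' i)]" using w d d' by auto
      have IH0: "f ?P' = (\<Inter>i\<in>dom ?P'. f [i \<mapsto> the (?P' i)])"
        using insert.IH d' pP' w' by blast
      have "(\<Inter>i\<in>dom ?P'. f [i \<mapsto> the (?P' i)]) = (\<Inter>i\<in>D. f [i \<mapsto> the (P i)])"
        using d' by (intro INF_cong) auto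
      hence IH: "f ?P' = (\<Inter>i\<in>D. f [i \<mapsto> the (P i)])" using IH0 by simp
      have a0: "0 < a" "the (P a) \<noteq> {}" using pP d unfolding is_profile_def
        by (metis gr0I insertI1, blast)
      have psv: "is_profile [a \<mapsto> the (P a)]" using a0 by (rule sv_profile)
      have aD: "a \<notin> D" using insert.hyps by blast
      have eq: "P = ?P' ++ [a \<mapsto> the (P a)]"
      proof (rule ext)
        fix i
        show "P i = (?P' ++ [a \<mapsto> the (P a)]) i"
        proof (cases "i = a")
          case True
          have "a \<in> dom P" using d by simp
          then obtain y where "P a = Some y" by blast
          then show ?thesis using True by simp
        next
          case False
          show ?thesis
          proof (cases "i \<in> D")
            case True then show ?thesis using False by (simp add: map_add_def)
          next
            case F2: False
            have "i \<notin> dom P" using d False F2 by simp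
            then have "P i = None" by blast
            then show ?thesis using False F2 by (simp add: map_add_def)
          qed
        qed
      qed
      have w1: "W' \<in> f ?P'" using IH w d by simp
      have w2: "W' \<in> f [a \<mapsto> the (P a)]" using w d by simp
      have ne: "f ?P' \<inter> f [a \<mapsto> the (P a)] \<noteq> {}" using w1 w2 by blast
      have dd: "dom ?P' \<inter> dom [a \<mapsto> the (P a)] = {}" using d' aD by simp
      have "f (?P' ++ [a \<mapsto> the (P a)]) = f ?P' \<inter> f [a \<mapsto> the (P a)]"
        apply (rule cons[unfolded consistent_def, rule_format])
        using pP' psv ne dd by blast
      with arg_cong[OF eq, of f] have "f P = f ?P' \<inter> f [a \<mapsto> the (P a)]" by (rule trans)
      thus "f P = (\<Inter>i\<in>dom P. f [i \<mapsto> the (P i)])" using IH d by auto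
    qed
  qed
  note main = this
  show ?thesis using main[OF fin, THEN spec[where x=P]] P W by simp
qed

lemma sym_all:
  fixes f :: "('c::finite) profile \<Rightarrow> 'c set set"
  assumes ab: "abc_rule k f" and an: "anonymous f" and ne: "neutral f"
    and A: "each_once X A" and inv: "\<And>\<tau>. bij \<tau> \<Longrightarrow> (\<lambda>S. \<tau> ` S) ` X = X"
  shows "f A = committees k"
proof
  have pA: "is_profile A" using A by (simp add: each_once_def)
  show "f A \<subseteq> committees k" using ab pA by (auto simp: abc_rule_def)
  obtain W where W: "W \<in> f A" using ab pA by (auto simp: abc_rule_def)
  have Wc: "card W = k" using ab pA W by (auto simp: abc_rule_def committees_def)
  show "committees k \<subseteq> f A"
  proof
    fix W' :: "'c set" assume "W' \<in> committees k"
    hence "card W' = k" by (simp add: committees_def)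
    then obtain \<tau> where \<tau>: "bij \<tau>" "\<tau> ` W = W'" using ex_perm3[of "{}" W "{}" W'] Wc by auto
    have "each_once X (pmap \<tau> A)" using each_once_pmap[OF \<tau>(1) A] inv[OF \<tau>(1)] by simp
    hence "f (pmap \<tau> A) = f A" using each_once_same[OF an] A by blast
    moreover have "f (pmap \<tau> A) = (\<lambda>W. \<tau> ` W) ` f A"
      using ne \<tau>(1) pA unfolding neutral_def pmap_def by blast
    ultimately show "W' \<in> f A" using W \<tau>(2) by blast
  qed
qed

lemma tri:
  fixes f :: "('c::finite) profile \<Rightarrow> 'c set set"
  assumes an: "anonymous f" and ne: "neutral f"
    and A: "each_once X A" and inv: "\<And>\<tau>. bij \<tau> \<Longrightarrow> \<tau> x = x \<Longrightarrow> (\<lambda>S. \<tau> ` S) ` X = X"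
    and W: "W \<in> f A" and cW: "card W = card W'" and xW: "x \<in> W \<longleftrightarrow> x \<in> W'"
  shows "W' \<in> f A"
proof -
  have pA: "is_profile A" using A by (simp add: each_once_def)
  have "card (W - {x}) = card (W' - {x})" using cW xW by (cases "x \<in> W") auto
  then obtain \<tau> where \<tau>: "bij \<tau>" "\<tau> ` {x} = {x}" "\<tau> ` (W - {x}) = W' - {x}"
    using ex_perm3[of "{x}" "W - {x}" "{x}" "W' - {x}"] by auto
  have tx: "\<tau> x = x" using \<tau>(2) by auto
  have tW: "\<tau> ` W = W'"
  proof (cases "x \<in> W")
    case True then have "W = insert x (W - {x})" by auto
    then have "\<tau> ` W = insert (\<tau> x) (\<tau> ` (W - {x}))" by (metis image_insert)
    thus ?thesis using \<tau>(3) tx True xW by auto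
  next
    case False then show ?thesis using \<tau>(3) xW by simp
  qed
  have "each_once X (pmap \<tau> A)" using each_once_pmap[OF \<tau>(1) A] inv[OF \<tau>(1) tx] by simp
  hence "f (pmap \<tau> A) = f A" using each_once_same[OF an] A by blast
  moreover have "f (pmap \<tau> A) = (\<lambda>W. \<tau> ` W) ` f A"
    using ne \<tau>(1) pA unfolding neutral_def pmap_def by blast
  ultimately show "W' \<in> f A" using W tW by blast
qed

lemma iol_shr:
  assumes il: "indep_losers f" and P: "is_profile A" and W: "W \<in> f A"
    and sh: "\<And>i. i \<in> dom A \<Longrightarrow> g (the (A i)) \<subseteq> the (A i) \<and> g (the (A i)) \<noteq> {} \<and>
               W \<inter> g (the (A i)) = W \<inter> the (A i)"
  shows "W \<in> f (shr g A)"
proof -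
  have pS: "is_profile (shr g A)" using P sh unfolding is_profile_def by (simp add: the_shr)
  show ?thesis
    apply (rule il[unfolded indep_losers_def, rule_format, of A "shr g A" W])
    using P pS W sh by (auto simp: the_shr)
qed



lemma each_once_prof: "each_once X A \<Longrightarrow> is_profile A" by (simp add: each_once_def)

lemma each_once_in: "each_once X A \<Longrightarrow> i \<in> dom A \<Longrightarrow> the (A i) \<in> X"
  unfolding each_once_def by (metis bij_betwE)

lemma each_once_surj: "each_once X A \<Longrightarrow> S \<in> X \<Longrightarrow> \<exists>i\<in>dom A. the (A i) = S"
  unfolding each_once_def bij_betw_def by (metis imageE)

lemma each_once_sv: "0 < i \<Longrightarrow> S \<noteq> {} \<Longrightarrow> each_once {S} [i \<mapsto> S]"
  by (simp add: each_once_def sv_profile bij_betw_def)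

lemma ex_each_once:
  fixes X :: "('c::finite) set set"
  assumes "X \<noteq> {}" "{} \<notin> X"
  shows "\<exists>A. each_once X A"
proof -
  have fX: "finite X" by simp
  obtain h where h: "bij_betw h {1..card X} X" using ex_bij_betw_nat_finite_1[OF fX] by blast
  define A where "A i = (if i \<in> {1..card X} then Some (h i) else None)" for i
  have dom: "dom A = {1..card X}" by (auto simp: A_def dom_def)
  have "bij_betw (\<lambda>i. the (A i)) {1..card X} X = bij_betw h {1..card X} X"
    by (rule bij_betw_cong) (simp add: A_def)
  hence b: "bij_betw (\<lambda>i. the (A i)) (dom A) X" using h dom by simp
  have "card X > 0" using assms(1) fX by (simp add: card_gt_0_iff)
  hence ne: "dom A \<noteq> {}" using dom by auto
  have "\<forall>i\<in>dom A. the (A i) \<noteq> {}"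
  proof
    fix i assume "i \<in> dom A"
    hence "the (A i) \<in> X" using b by (metis bij_betwE)
    thus "the (A i) \<noteq> {}" using assms(2) by auto
  qed
  hence "is_profile A" using ne dom unfolding is_profile_def by auto
  thus ?thesis using b by (auto simp: each_once_def)
qed

lemma card_Compl_single: "card (- {x::'c::finite}) = card (UNIV::'c set) - 1"
  by (simp add: Compl_eq_Diff_UNIV card_Diff_singleton)

lemma Xw_ne:
  assumes "1 \<le> r" "r \<le> card (UNIV::'c::finite set)"
  shows "{S::'c set. card S = r \<and> x \<in> S} \<noteq> {}"
proof -
  have "r - 1 \<le> card (- {x})" using assms card_Compl_single[of x] by simp
  then obtain T where T: "T \<subseteq> - {x}" "card T = r - 1" "finite T" by (rule obtain_subset_with_card_n)
  have "card (insert x T) = r" using T assms by auto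
  thus ?thesis by blast
qed

lemma Xo_ne:
  assumes "r < card (UNIV::'c::finite set)"
  shows "{S::'c set. card S = r \<and> x \<notin> S} \<noteq> {}"
proof -
  have "r \<le> card (- {x})" using assms card_Compl_single[of x] by simp
  then obtain T where T: "T \<subseteq> - {x}" "card T = r" "finite T" by (rule obtain_subset_with_card_n)
  thus ?thesis by blast
qed

lemma Xw_full: "{S::'c::finite set. card S = card (UNIV::'c set) \<and> x \<in> S} = {S. card S = card (UNIV::'c set)}"
proof -
  have "S = UNIV" if "card S = card (UNIV::'c set)" for S :: "'c set"
    using card_eq_UNIV_imp_eq_UNIV[OF finite_UNIV that] .
  thus ?thesis by auto
qed

lemma iol_step:
  fixes f :: "('c::finite) profile \<Rightarrow> 'c set set"
  assumes il: "indep_losers f" and an: "anonymous f"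
    and A: "each_once {S. card S = Suc r \<and> x \<in> S} A" and W: "W \<in> f A" and xW: "x \<notin> W"
    and r: "1 \<le> r" and B: "each_once {S. card S = r \<and> x \<notin> S} B"
  shows "W \<in> f B"
proof -
  let ?g = "\<lambda>S::'c set. S - {x}"
  have bij: "bij_betw ?g {S. card S = Suc r \<and> x \<in> S} {S. card S = r \<and> x \<notin> S}"
    unfolding bij_betw_def
  proof
    show "inj_on ?g {S. card S = Suc r \<and> x \<in> S}"
      by (auto simp: inj_on_def)
    show "?g ` {S. card S = Suc r \<and> x \<in> S} = {S. card S = r \<and> x \<notin> S}"
    proof
      show "?g ` {S. card S = Suc r \<and> x \<in> S} \<subseteq> {S. card S = r \<and> x \<notin> S}"
        by auto
      show "{S. card S = r \<and> x \<notin> S} \<subseteq> ?g ` {S. card S = Suc r \<and> x \<in> S}"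
      proof
        fix T :: "'c set" assume T: "T \<in> {S. card S = r \<and> x \<notin> S}"
        hence "insert x T \<in> {S. card S = Suc r \<and> x \<in> S}" by simp
        moreover have "T = ?g (insert x T)" using T by auto
        ultimately show "T \<in> ?g ` {S. card S = Suc r \<and> x \<in> S}" by blast
      qed
    qed
  qed
  have e0: "{} \<notin> {S::'c set. card S = r \<and> x \<notin> S}" using r by auto
  have eA': "each_once {S. card S = r \<and> x \<notin> S} (shr ?g A)" by (rule each_once_map[OF A bij e0])
  have "W \<in> f (shr ?g A)"
  proof (rule iol_shr[OF il each_once_prof[OF A] W])
    fix i assume i: "i \<in> dom A"
    have T: "card (the (A i)) = Suc r" "x \<in> the (A i)" using each_once_in[OF A i] by auto
    have "the (A i) - {x} \<noteq> {}"
    proof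
      assume "the (A i) - {x} = {}"
      hence "the (A i) \<subseteq> {x}" by blast
      hence "card (the (A i)) \<le> 1" by (metis card.empty card.insert empty_iff finite.intros(1) le_less subset_singletonD insert_absorb2 One_nat_def order_refl card_mono finite_insert)
      thus False using T r by simp
    qed
    thus "the (A i) - {x} \<subseteq> the (A i) \<and> the (A i) - {x} \<noteq> {} \<and> W \<inter> (the (A i) - {x}) = W \<inter> the (A i)"
      using xW by auto
  qed
  moreover have "f (shr ?g A) = f B" using each_once_same[OF an eA' B] .
  ultimately show ?thesis by simp
qed



lemma pair_all:
  fixes f :: "('c::finite) profile \<Rightarrow> 'c set set"
  assumes ab: "abc_rule k f" and an: "anonymous f" and ne: "neutral f" and cons: "consistent f"
    and r: "1 \<le> r" "r < card (UNIV::'c set)"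
    and A: "each_once {S. card S = r \<and> x \<in> S} A" and B: "each_once {S. card S = r \<and> x \<notin> S} B"
    and int: "f A \<inter> f B \<noteq> {}"
  shows "f A = committees k \<and> f B = committees k"
proof -
  have "{S::'c set. card S = r \<and> x \<in> S} \<noteq> {}" by (rule Xw_ne) (use r in auto)
  hence XallNe: "{S::'c set. card S = r} \<noteq> {}" by blast
  have e0: "{} \<notin> {S::'c set. card S = r}" using r by auto
  obtain C where C: "each_once {S::'c set. card S = r} C" using ex_each_once[OF XallNe e0] by blast
  have fC: "f C = committees k"
    by (rule sym_all[OF ab an ne C]) (rule image_Xall)
  let ?A' = "C |` {i. the (C i) \<in> {S. card S = r \<and> x \<in> S}}"
  let ?B' = "C |` {i. the (C i) \<in> {S. card S = r \<and> x \<notin> S}}"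
  have A': "each_once {S. card S = r \<and> x \<in> S} ?A'"
    by (rule each_once_restrict[OF C]) (use \<open>{S::'c set. card S = r \<and> x \<in> S} \<noteq> {}\<close> in auto)
  have B': "each_once {S. card S = r \<and> x \<notin> S} ?B'"
    by (rule each_once_restrict[OF C]) (use Xo_ne[OF r(2), of x] in auto)
  have fA: "f ?A' = f A" using each_once_same[OF an A' A] .
  have fB: "f ?B' = f B" using each_once_same[OF an B' B] .
  have eq: "C = ?A' ++ ?B'"
  proof (rule ext)
    fix i
    show "C i = (?A' ++ ?B') i"
    proof (cases "C i")
      case None
      then show ?thesis by (simp add: restrict_map_def map_add_def)
    next
      case (Some S)
      hence "i \<in> dom C" by blast
      hence "card S = r" using each_once_in[OF C] Some by fastforce
      then show ?thesis using Some by (cases "x \<in> S") (simp_all add: restrict_map_def map_add_def)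
    qed
  qed
  have dd: "dom ?A' \<inter> dom ?B' = {}" by auto
  have "f (?A' ++ ?B') = f ?A' \<inter> f ?B'"
    apply (rule cons[unfolded consistent_def, rule_format])
    using each_once_prof[OF A'] each_once_prof[OF B'] dd int fA fB by simp
  hence "committees k = f A \<inter> f B" using fC eq fA fB by simp
  moreover have "f A \<subseteq> committees k" "f B \<subseteq> committees k"
    using ab each_once_prof[OF A] each_once_prof[OF B] by (auto simp: abc_rule_def)
  ultimately show ?thesis by blast
qed

lemma single_case1:
  fixes f :: "('c::finite) profile \<Rightarrow> 'c set set"
  assumes ab: "abc_rule k f" and an: "anonymous f" and ne: "neutral f" and cons: "consistent f"
    and il: "indep_losers f"
    and k: "k < card (UNIV::'c set)"
    and H: "\<And>x s A. 1 \<le> s \<Longrightarrow> s < card (UNIV::'c set) \<Longrightarrow>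
               each_once {S. card S = s \<and> x \<in> S} A \<Longrightarrow> f A = committees k"
    and 3: "2 \<le> s" "s < card (UNIV::'c set)"
    and IH: "\<And>T j. card T < s \<Longrightarrow> 0 < j \<Longrightarrow> T \<noteq> {} \<Longrightarrow> f [j \<mapsto> T] = committees k"
    and S': "card S' = s" and j: "0 < j" and W: "W \<in> committees k" and nsub: "\<not> S' \<subseteq> W"
  shows "W \<in> f [j \<mapsto> S']"
proof -
  have sub: "\<And>j T. 0 < j \<Longrightarrow> T \<noteq> {} \<Longrightarrow> f [j \<mapsto> T] \<subseteq> committees k"
    using ab by (simp add: abc_rule_def sv_profile)
  show ?thesis
      proof -
        obtain x where x: "x \<in> S'" "x \<notin> W" using nsub by blast
        have S'ne: "S' \<noteq> {}" using x by blast
        have "{T::'c set. card T = s \<and> x \<in> T} \<noteq> {}" by (rule Xw_ne) (use 3 in auto)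
        then obtain A where A: "each_once {T. card T = s \<and> x \<in> T} A"
          using ex_each_once[of "{T. card T = s \<and> x \<in> T}"] by auto
        have fA: "f A = committees k" using H[OF _ _ A] 3 by simp
        obtain i0 where i0: "i0 \<in> dom A" "the (A i0) = S'" using each_once_surj[OF A] x S' by blast
        have pA: "is_profile A" using A by (rule each_once_prof)
        have i00: "0 < i0" using pA i0 by (auto simp: is_profile_def intro: gr0I)
        define g where "g T = (if T = S' then S' else T - {x})" for T
        have gprop: "g (the (A j)) \<subseteq> the (A j) \<and> g (the (A j)) \<noteq> {} \<and> W \<inter> g (the (A j)) = W \<inter> the (A j)"
          if jA: "j \<in> dom A" for j
        proof -
          have T: "card (the (A j)) = s" "x \<in> the (A j)" using each_once_in[OF A jA] by auto
          have "the (A j) - {x} \<noteq> {}"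
          proof
            assume "the (A j) - {x} = {}"
            hence "the (A j) \<subseteq> {x}" by blast
            hence "card (the (A j)) \<le> card {x}" by (intro card_mono) auto
            thus False using T 3 by simp
          qed
          thus ?thesis using x S'ne by (auto simp: g_def)
        qed
        have Wg: "W \<in> f (shr g A)"
          by (rule iol_shr[OF il pA]) (use fA W gprop in auto)
        have pS: "is_profile (shr g A)" using pA gprop unfolding is_profile_def by (simp add: the_shr)
        obtain W' where W': "W' \<in> f [i0 \<mapsto> S']"
          using ab sv_profile[OF i00 S'ne] by (auto simp: abc_rule_def)
        have W'c: "W' \<in> committees k" using sub[OF i00 S'ne] W' by blast
        have allW': "\<forall>j\<in>dom (shr g A). W' \<in> f [j \<mapsto> the (shr g A j)]"
        proof
          fix j assume "j \<in> dom (shr g A)"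
          hence jA: "j \<in> dom A" by simp
          have j0: "0 < j" using pA jA by (auto simp: is_profile_def intro: gr0I)
          have T: "card (the (A j)) = s" "x \<in> the (A j)" using each_once_in[OF A jA] by auto
          show "W' \<in> f [j \<mapsto> the (shr g A j)]"
          proof (cases "the (A j) = S'")
            case True
            hence "the (shr g A j) = S'" using jA by (simp add: the_shr g_def)
            thus ?thesis using W' sv_anon[OF an j0 i00 S'ne] by simp
          next
            case False
            hence tg: "the (shr g A j) = the (A j) - {x}" using jA by (simp add: the_shr g_def)
            have "card (the (A j) - {x}) < s" using T 3 by simp
            moreover have "the (A j) - {x} \<noteq> {}" using gprop[OF jA] False by (simp add: g_def)
            ultimately show ?thesis using IH[OF _ j0] W'c tg by simp
          qed
        qed
        have "f (shr g A) = (\<Inter>j\<in>dom (shr g A). f [j \<mapsto> the (shr g A j)])"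
          by (rule cons_singles[OF cons pS allW'])
        also have "\<dots> \<subseteq> f [i0 \<mapsto> the (shr g A i0)]" using i0 by auto
        also have "the (shr g A i0) = S'" using i0 by (simp add: the_shr g_def)
        finally have "W \<in> f [i0 \<mapsto> S']" using Wg by blast
        thus ?thesis using sv_anon[OF an j i00 S'ne] by simp
      qed
qed

lemma single_case2:
  fixes f :: "('c::finite) profile \<Rightarrow> 'c set set"
  assumes ab: "abc_rule k f" and an: "anonymous f" and ne: "neutral f" and cons: "consistent f"
    and il: "indep_losers f"
    and k: "k < card (UNIV::'c set)"
    and H: "\<And>x s A. 1 \<le> s \<Longrightarrow> s < card (UNIV::'c set) \<Longrightarrow>
               each_once {S. card S = s \<and> x \<in> S} A \<Longrightarrow> f A = committees k"
    and 3: "2 \<le> s" "s < card (UNIV::'c set)"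
    and IH: "\<And>T j. card T < s \<Longrightarrow> 0 < j \<Longrightarrow> T \<noteq> {} \<Longrightarrow> f [j \<mapsto> T] = committees k"
    and case1: "\<And>S' W j. card S' = s \<Longrightarrow> 0 < j \<Longrightarrow> W \<in> committees k \<Longrightarrow> \<not> S' \<subseteq> W \<Longrightarrow> W \<in> f [j \<mapsto> S']"
    and cS: "card S = s" and i: "0 < i" and Sne: "S \<noteq> {}" and W: "W \<in> committees k" and True: "S \<subseteq> W"
  shows "W \<in> f [i \<mapsto> S]"
proof -
  have sub: "\<And>j T. 0 < j \<Longrightarrow> T \<noteq> {} \<Longrightarrow> f [j \<mapsto> T] \<subseteq> committees k"
    using ab by (simp add: abc_rule_def sv_profile)
  show ?thesis
  proof -
            obtain y where y: "y \<in> S" using Sne by blast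
            have "{T::'c set. card T = s \<and> y \<in> T} \<noteq> {}" by (rule Xw_ne) (use 3 in auto)
        then obtain A where A: "each_once {T. card T = s \<and> y \<in> T} A"
          using ex_each_once[of "{T. card T = s \<and> y \<in> T}"] by auto
            have fA: "f A = committees k" using H[OF _ _ A] 3 by simp
            obtain i0 where i0: "i0 \<in> dom A" "the (A i0) = S" using each_once_surj[OF A] y cS by blast
            have pA: "is_profile A" using A by (rule each_once_prof)
            have i00: "0 < i0" using pA i0 by (auto simp: is_profile_def intro: gr0I)
            define g where "g T = (if T \<subseteq> W then T else T - {SOME z. z \<in> T - W})" for T
            have gprop: "g (the (A j)) \<subseteq> the (A j) \<and> g (the (A j)) \<noteq> {} \<and>
                         W \<inter> g (the (A j)) = W \<inter> the (A j) \<and>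
                         (\<not> the (A j) \<subseteq> W \<longrightarrow> card (g (the (A j))) < s)"
              if jA: "j \<in> dom A" for j
            proof -
              let ?T = "the (A j)"
              have T: "card ?T = s" "y \<in> ?T" using each_once_in[OF A jA] by auto
              show ?thesis
              proof (cases "?T \<subseteq> W")
                case True thus ?thesis using T by (auto simp: g_def)
              next
                case False
                hence "\<exists>z. z \<in> ?T - W" by blast
                hence z: "(SOME z. z \<in> ?T - W) \<in> ?T - W" by (rule someI_ex)
                let ?z = "SOME z. z \<in> ?T - W"
                have ne: "?T - {?z} \<noteq> {}"
                proof
                  assume "?T - {?z} = {}"
                  hence "?T \<subseteq> {?z}" by blast
                  hence "card ?T \<le> card {?z}" by (intro card_mono) auto
                  thus False using T 3 by simp
                qed
                have "card (?T - {?z}) < s" using T z 3 by simp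
                thus ?thesis using False z ne by (auto simp: g_def)
              qed
            qed
            have Wg: "W \<in> f (shr g A)"
              by (rule iol_shr[OF il pA]) (use fA W gprop in auto)
            have pS: "is_profile (shr g A)" using pA gprop unfolding is_profile_def by (simp add: the_shr)
            obtain W' where W': "W' \<in> {T::'c set. card T = k \<and> y \<notin> T}" using Xo_ne[OF k] by blast
            have W'c: "W' \<in> committees k" using W' by (simp add: committees_def)
            have allW': "\<forall>j\<in>dom (shr g A). W' \<in> f [j \<mapsto> the (shr g A j)]"
            proof
              fix j assume "j \<in> dom (shr g A)"
              hence jA: "j \<in> dom A" by simp
              have j0: "0 < j" using pA jA by (auto simp: is_profile_def intro: gr0I)
              have T: "card (the (A j)) = s" "y \<in> the (A j)" using each_once_in[OF A jA] by auto
              show "W' \<in> f [j \<mapsto> the (shr g A j)]"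
              proof (cases "the (A j) \<subseteq> W")
                case True
                hence "the (shr g A j) = the (A j)" using jA by (simp add: the_shr g_def)
                moreover have "\<not> the (A j) \<subseteq> W'" using T W' by auto
                ultimately show ?thesis using case1[OF T(1) j0 W'c] by simp
              next
                case False
                have "card (the (shr g A j)) < s" "the (shr g A j) \<noteq> {}"
                  using gprop[OF jA] False jA by (simp_all add: the_shr)
                thus ?thesis using IH[OF _ j0] W'c by simp
              qed
            qed
            have "f (shr g A) = (\<Inter>j\<in>dom (shr g A). f [j \<mapsto> the (shr g A j)])"
              by (rule cons_singles[OF cons pS allW'])
            also have "\<dots> \<subseteq> f [i0 \<mapsto> the (shr g A i0)]" using i0 by auto
            also have "the (shr g A i0) = S" using i0 True by (simp add: the_shr g_def)
            finally have "W \<in> f [i0 \<mapsto> S]" using Wg by blast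
            thus ?thesis using sv_anon[OF an i i00 Sne] by simp
  qed
qed

lemma singles_all:
  fixes f :: "('c::finite) profile \<Rightarrow> 'c set set"
  assumes ab: "abc_rule k f" and an: "anonymous f" and ne: "neutral f" and cons: "consistent f"
    and il: "indep_losers f"
    and k: "k < card (UNIV::'c set)" and m2: "2 \<le> card (UNIV::'c set)"
    and H: "\<And>x s A. 1 \<le> s \<Longrightarrow> s < card (UNIV::'c set) \<Longrightarrow>
               each_once {S. card S = s \<and> x \<in> S} A \<Longrightarrow> f A = committees k"
  shows "\<forall>S i. card S = n \<longrightarrow> 0 < i \<longrightarrow> S \<noteq> {} \<longrightarrow> f [i \<mapsto> S] = committees k"
proof (induction n rule: less_induct)
  case (less s)
  show ?case
  proof (intro allI impI)
    fix S :: "'c set" and i :: nat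
    assume cS: "card S = s" and i: "0 < i" and Sne: "S \<noteq> {}"
    have IH: "\<And>T j. card T < s \<Longrightarrow> 0 < j \<Longrightarrow> T \<noteq> {} \<Longrightarrow> f [j \<mapsto> T] = committees k"
      using less by blast
    have sub: "\<And>j T. 0 < j \<Longrightarrow> T \<noteq> {} \<Longrightarrow> f [j \<mapsto> T] \<subseteq> committees k"
      using ab by (simp add: abc_rule_def sv_profile)
    have "card S > 0" using Sne by (simp add: card_gt_0_iff)
    hence s1: "1 \<le> s" using cS by simp
    have sm: "s \<le> card (UNIV::'c set)" using cS card_mono[OF finite_UNIV subset_UNIV, of S] by simp
    consider "s = 1" | "s = card (UNIV::'c set)" | "2 \<le> s" "s < card (UNIV::'c set)"
      using s1 sm by linarith
    then show "f [i \<mapsto> S] = committees k"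
    proof cases
      case 1
      then obtain y where y: "S = {y}" using cS card_1_singletonE by blast
      have "{T::'c set. card T = 1 \<and> y \<in> T} = {{y}}"
        by (auto simp: card_1_singleton_iff)
      hence eo: "each_once {T. card T = 1 \<and> y \<in> T} [i \<mapsto> S]" using each_once_sv[OF i Sne] y by simp
      show ?thesis using H[OF _ _ eo] 1 m2 by simp
    next
      case 2
      hence "S = UNIV" using cS card_eq_UNIV_imp_eq_UNIV[OF finite_UNIV, of S] by simp
      show ?thesis
      proof (rule sym_all[OF ab an ne each_once_sv[OF i Sne]])
        fix \<tau> :: "'c \<Rightarrow> 'c" assume "bij \<tau>"
        thus "(\<lambda>S. \<tau> ` S) ` {S} = {S}" using \<open>S = UNIV\<close> by (simp add: bij_is_surj)
      qed
    next
      case 3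
      have case1: "W \<in> f [j \<mapsto> S']"
        if "card S' = s" "0 < j" "W \<in> committees k" "\<not> S' \<subseteq> W" for S' W j
        using single_case1[OF ab an ne cons il k H 3 IH that] .
      show ?thesis
      proof
        show "f [i \<mapsto> S] \<subseteq> committees k" using sub[OF i Sne] .
        show "committees k \<subseteq> f [i \<mapsto> S]"
        proof
          fix W :: "'c set" assume W: "W \<in> committees k"
          show "W \<in> f [i \<mapsto> S]"
          proof (cases "S \<subseteq> W")
            case False
            thus ?thesis using case1[OF cS i W] by blast
          next
            case True
            show ?thesis using single_case2[OF ab an ne cons il k H 3 IH case1 cS i Sne W True] .
          qed
        qed
      qed
    qed
  qed
qed



lemma pmap_inv:
  fixes \<tau> :: "'c \<Rightarrow> 'c"
  assumes "bij \<tau>"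
  shows "pmap \<tau> (pmap (inv \<tau>) B) = B"
proof (rule ext)
  fix i
  have "\<tau> ` (inv \<tau> ` S) = S" for S using assms
    by (simp add: image_image bij_is_surj surj_f_inv_f)
  thus "pmap \<tau> (pmap (inv \<tau>) B) i = B i"
    by (cases "B i") (simp_all add: pmap_def)
qed

lemma In_eq: "{W \<in> committees k. x \<in> W} = {W. card W = k \<and> x \<in> W}"
  by (auto simp: committees_def)
lemma Out_eq: "{W \<in> committees k. x \<notin> W} = {W. card W = k \<and> x \<notin> W}"
  by (auto simp: committees_def)

lemma transport_w:
  fixes f :: "('c::finite) profile \<Rightarrow> 'c set set"
  assumes an: "anonymous f" and ne: "neutral f" and \<tau>: "bij \<tau>" "\<tau> x = y"
    and good: "\<forall>A. each_once {S. card S = r \<and> x \<in> S} A \<longrightarrow> f A = {W. card W = k \<and> x \<in> W}"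
    and B: "each_once {S. card S = r \<and> y \<in> S} B"
  shows "f B = {W. card W = k \<and> y \<in> W}"
proof -
  have \<sigma>: "bij (inv \<tau>)" using \<tau>(1) by (rule bij_imp_bij_inv)
  have \<sigma>y: "inv \<tau> y = x" using \<tau> by (metis bij_is_inj inv_f_f)
  have "each_once ((\<lambda>S. inv \<tau> ` S) ` {S. card S = r \<and> y \<in> S}) (pmap (inv \<tau>) B)"
    by (rule each_once_pmap[OF \<sigma> B])
  hence A: "each_once {S. card S = r \<and> x \<in> S} (pmap (inv \<tau>) B)"
    using image_Xw[OF \<sigma>, of r y] \<sigma>y by simp
  have fA: "f (pmap (inv \<tau>) B) = {W. card W = k \<and> x \<in> W}" using good A by blast
  have "f (pmap \<tau> (pmap (inv \<tau>) B)) = (\<lambda>W. \<tau> ` W) ` f (pmap (inv \<tau>) B)"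
    using ne \<tau>(1) each_once_prof[OF A] unfolding neutral_def pmap_def by blast
  thus ?thesis using pmap_inv[OF \<tau>(1)] fA image_Xw[OF \<tau>(1), of k x] \<tau>(2) by simp
qed

lemma transport_o:
  fixes f :: "('c::finite) profile \<Rightarrow> 'c set set"
  assumes an: "anonymous f" and ne: "neutral f" and \<tau>: "bij \<tau>" "\<tau> x = y"
    and good: "\<forall>A. each_once {S. card S = r \<and> x \<notin> S} A \<longrightarrow> f A = {W. card W = k \<and> x \<notin> W}"
    and B: "each_once {S. card S = r \<and> y \<notin> S} B"
  shows "f B = {W. card W = k \<and> y \<notin> W}"
proof -
  have \<sigma>: "bij (inv \<tau>)" using \<tau>(1) by (rule bij_imp_bij_inv)
  have \<sigma>y: "inv \<tau> y = x" using \<tau> by (metis bij_is_inj inv_f_f)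
  have "each_once ((\<lambda>S. inv \<tau> ` S) ` {S. card S = r \<and> y \<notin> S}) (pmap (inv \<tau>) B)"
    by (rule each_once_pmap[OF \<sigma> B])
  hence A: "each_once {S. card S = r \<and> x \<notin> S} (pmap (inv \<tau>) B)"
    using image_Xo[OF \<sigma>, of r y] \<sigma>y by simp
  have fA: "f (pmap (inv \<tau>) B) = {W. card W = k \<and> x \<notin> W}" using good A by blast
  have "f (pmap \<tau> (pmap (inv \<tau>) B)) = (\<lambda>W. \<tau> ` W) ` f (pmap (inv \<tau>) B)"
    using ne \<tau>(1) each_once_prof[OF A] unfolding neutral_def pmap_def by blast
  thus ?thesis using pmap_inv[OF \<tau>(1)] fA image_Xo[OF \<tau>(1), of k x] \<tau>(2) by simp
qed

lemma all_full:
  fixes f :: "('c::finite) profile \<Rightarrow> 'c set set" and k :: nat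
  assumes k1: "1 \<le> k" and k: "k < card (UNIV::'c set)"
    and ab: "abc_rule k f" and an: "anonymous f" and ne: "neutral f" and cons: "consistent f"
    and il: "indep_losers f"
    and ng: "\<And>r. 1 \<le> r \<Longrightarrow> r < card (UNIV::'c set) \<Longrightarrow>
       \<not> ((\<forall>A. each_once {S. card S = r \<and> x \<in> S} A \<longrightarrow> f A = {W. card W = k \<and> x \<in> W}) \<and>
          (\<forall>A. each_once {S. card S = r \<and> x \<notin> S} A \<longrightarrow> f A = {W. card W = k \<and> x \<notin> W}))"
    and r: "1 \<le> r" "r < card (UNIV::'c set)" and A: "each_once {S. card S = r \<and> x \<in> S} A"
  shows "f A = committees k"
proof -
  let ?m = "card (UNIV::'c set)"
  let ?Out = "{W::'c set. card W = k \<and> x \<notin> W}"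
  let ?In = "{W::'c set. card W = k \<and> x \<in> W}"
  have outne: "?Out \<noteq> {}" using Xo_ne[OF k] .
  have fsub: "f P \<subseteq> committees k" if "is_profile P" for P using ab that by (auto simp: abc_rule_def)
  have fne: "f P \<noteq> {}" if "is_profile P" for P using ab that by (auto simp: abc_rule_def)
  have invw: "(\<lambda>S. \<tau> ` S) ` {S. card S = r' \<and> x \<in> S} = {S. card S = r' \<and> x \<in> S}"
    if "bij \<tau>" "\<tau> x = x" for \<tau> r' using image_Xw[OF that(1)] that(2) by simp
  have invo: "(\<lambda>S. \<tau> ` S) ` {S. card S = r' \<and> x \<notin> S} = {S. card S = r' \<and> x \<notin> S}"
    if "bij \<tau>" "\<tau> x = x" for \<tau> r' using image_Xo[OF that(1)] that(2) by simp
  have exB: "\<exists>B. each_once {S. card S = r' \<and> x \<notin> S} B" if "1 \<le> r'" "r' < ?m" for r'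
    using ex_each_once[OF Xo_ne[OF that(2)]] that(1) by auto
  have exA: "\<exists>A. each_once {S. card S = r' \<and> x \<in> S} A" if "1 \<le> r'" "r' \<le> ?m" for r'
    using ex_each_once[OF Xw_ne[OF that]] by auto
  have c1: "f A \<inter> ?Out \<noteq> {}"
    if r': "1 \<le> r'" "r' < ?m" and A: "each_once {S. card S = r' \<and> x \<in> S} A" for r' A
  proof
    assume dis: "f A \<inter> ?Out = {}"
    have pA: "is_profile A" using A by (rule each_once_prof)
    obtain W0 where W0: "W0 \<in> f A" using fne[OF pA] by blast
    have W0c: "card W0 = k" using fsub[OF pA] W0 by (auto simp: committees_def)
    have xW0: "x \<in> W0" using dis W0 W0c by blast
    have fAin: "f A = ?In"
    proof
      show "f A \<subseteq> ?In" using fsub[OF pA] dis by (auto simp: committees_def)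
      show "?In \<subseteq> f A"
      proof
        fix W assume "W \<in> ?In"
        thus "W \<in> f A" using tri[OF an ne A invw W0] W0c xW0 by auto
      qed
    qed
    obtain B where B: "each_once {S. card S = r' \<and> x \<notin> S} B" using exB[OF r'] by blast
    have pB: "is_profile B" using B by (rule each_once_prof)
    have disAB: "f A \<inter> f B = {}"
    proof (rule ccontr)
      assume "f A \<inter> f B \<noteq> {}"
      hence "f A = committees k" using pair_all[OF ab an ne cons r' A B] by blast
      thus False using dis outne by (auto simp: committees_def)
    qed
    obtain W1 where W1: "W1 \<in> f B" using fne[OF pB] by blast
    have W1c: "card W1 = k" using fsub[OF pB] W1 by (auto simp: committees_def)
    have xW1: "x \<notin> W1" using disAB W1 W1c fAin by blast
    have fBout: "f B = ?Out"
    proof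
      show "f B \<subseteq> ?Out" using fsub[OF pB] disAB fAin by (auto simp: committees_def)
      show "?Out \<subseteq> f B"
      proof
        fix W assume "W \<in> ?Out"
        thus "W \<in> f B" using tri[OF an ne B invo W1] W1c xW1 by auto
      qed
    qed
    have "(\<forall>A'. each_once {S. card S = r' \<and> x \<in> S} A' \<longrightarrow> f A' = ?In) \<and>
          (\<forall>B'. each_once {S. card S = r' \<and> x \<notin> S} B' \<longrightarrow> f B' = ?Out)"
      using each_once_same[OF an _ A] each_once_same[OF an _ B] fAin fBout by metis
    thus False using ng[OF r'] by blast
  qed
  have c2: "f B \<inter> ?Out \<noteq> {}"
    if r': "1 \<le> r'" "r' < ?m" and B: "each_once {S. card S = r' \<and> x \<notin> S} B" for r' B
  proof -
    obtain A where A: "each_once {S. card S = Suc r' \<and> x \<in> S} A" using exA[of "Suc r'"] r' by auto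
    obtain W where W: "W \<in> f A" "x \<notin> W"
    proof (cases "Suc r' < ?m")
      case True
      then show ?thesis using c1[of "Suc r'" A] A that by auto
    next
      case False
      hence "Suc r' = ?m" using r' by simp
      hence "each_once {S. card S = ?m} A" using A Xw_full[of x] by simp
      hence "f A = committees k" by (rule sym_all[OF ab an ne]) (rule image_Xall)
      then show ?thesis using that outne by (auto simp: committees_def)
    qed
    have "W \<in> f B" using iol_step[OF il an A W r'(1) B] .
    moreover have "W \<in> committees k" using W fsub[OF each_once_prof[OF A]] by blast
    ultimately show ?thesis using W by (auto simp: committees_def)
  qed
  have outsub: "?Out \<subseteq> f P" if meet: "f P \<inter> ?Out \<noteq> {}" and P: "each_once X P"
     and inv: "\<And>\<tau>. bij \<tau> \<Longrightarrow> \<tau> x = x \<Longrightarrow> (\<lambda>S. \<tau> ` S) ` X = X" for P X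
  proof
    obtain W0 where W0: "W0 \<in> f P" "card W0 = k" "x \<notin> W0" using meet by blast
    fix W assume "W \<in> ?Out"
    thus "W \<in> f P" using tri[OF an ne P inv W0(1)] W0 by auto
  qed
  obtain B where B: "each_once {S. card S = r \<and> x \<notin> S} B" using exB[OF r] by blast
  have "?Out \<subseteq> f A" by (rule outsub[OF c1[OF r A] A invw])
  moreover have "?Out \<subseteq> f B" by (rule outsub[OF c2[OF r B] B invo])
  ultimately have "f A \<inter> f B \<noteq> {}" using outne by blast
  thus ?thesis using pair_all[OF ab an ne cons r A B] by blast
qed

theorem mainTheorem14:
  fixes f :: "('c::finite) profile \<Rightarrow> 'c set set" and k :: nat
  assumes "card (UNIV::'c set) \<ge> 2" and "1 \<le> k" and "k < card (UNIV::'c set)"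
    and "abc_rule k f" and "\<not> trivial_rule k f"
    and "anonymous f" and "neutral f" and "consistent f"
    and "continuous_rule f" and "indep_losers f"
  shows "\<exists>r\<in>{1..card (UNIV::'c set) - 1}. \<forall>x::'c.
           (\<forall>A. prof_with x r A \<longrightarrow> f A = {W \<in> committees k. x \<in> W}) \<and>
           (\<forall>A. prof_without x r A \<longrightarrow> f A = {W \<in> committees k. x \<notin> W})"
proof (rule ccontr)
  assume neg: "\<not> ?thesis"
  let ?m = "card (UNIV::'c set)"
  note ab = assms(4) and an = assms(6) and ne = assms(7) and cons = assms(8) and il = assms(10)
  have ng: "\<not> ((\<forall>A. each_once {S. card S = r \<and> x \<in> S} A \<longrightarrow> f A = {W. card W = k \<and> x \<in> W}) \<and>
          (\<forall>A. each_once {S. card S = r \<and> x \<notin> S} A \<longrightarrow> f A = {W. card W = k \<and> x \<notin> W}))"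
    if r: "1 \<le> r" "r < ?m" for r x
  proof
    assume g: "(\<forall>A. each_once {S. card S = r \<and> x \<in> S} A \<longrightarrow> f A = {W. card W = k \<and> x \<in> W}) \<and>
          (\<forall>A. each_once {S. card S = r \<and> x \<notin> S} A \<longrightarrow> f A = {W. card W = k \<and> x \<notin> W})"
    have "\<forall>y::'c. (\<forall>A. prof_with y r A \<longrightarrow> f A = {W \<in> committees k. y \<in> W}) \<and>
           (\<forall>A. prof_without y r A \<longrightarrow> f A = {W \<in> committees k. y \<notin> W})"
    proof
      fix y :: 'c
      obtain \<tau> where \<tau>: "bij \<tau>" "\<tau> ` {x} = {y}" using ex_perm3[of "{x}" "{}" "{y}" "{}"] by auto
      have \<tau>x: "\<tau> x = y" using \<tau>(2) by auto
      have gw: "\<forall>A. each_once {S. card S = r \<and> x \<in> S} A \<longrightarrow> f A = {W. card W = k \<and> x \<in> W}"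
        using g by (rule conjunct1)
      have go: "\<forall>A. each_once {S. card S = r \<and> x \<notin> S} A \<longrightarrow> f A = {W. card W = k \<and> x \<notin> W}"
        using g by (rule conjunct2)
      show "(\<forall>A. prof_with y r A \<longrightarrow> f A = {W \<in> committees k. y \<in> W}) \<and>
           (\<forall>A. prof_without y r A \<longrightarrow> f A = {W \<in> committees k. y \<notin> W})"
        unfolding prof_with_def prof_without_def In_eq Out_eq
      proof (intro conjI allI impI)
        fix A assume "each_once {S. card S = r \<and> y \<in> S} A"
        thus "f A = {W. card W = k \<and> y \<in> W}" by (rule transport_w[OF an ne \<tau>(1) \<tau>x gw])
      next
        fix A assume "each_once {S. card S = r \<and> y \<notin> S} A"
        thus "f A = {W. card W = k \<and> y \<notin> W}" by (rule transport_o[OF an ne \<tau>(1) \<tau>x go])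
      qed
    qed
    moreover have "r \<in> {1..?m - 1}" using r by auto
    ultimately have "\<exists>r\<in>{1..?m - 1}. \<forall>x::'c.
           (\<forall>A. prof_with x r A \<longrightarrow> f A = {W \<in> committees k. x \<in> W}) \<and>
           (\<forall>A. prof_without x r A \<longrightarrow> f A = {W \<in> committees k. x \<notin> W})" by (rule bexI)
    thus False using neg by contradiction
  qed
  have H: "f A = committees k"
    if "1 \<le> s" "s < ?m" "each_once {S. card S = s \<and> x \<in> S} A" for x s A
    by (rule all_full[OF assms(2) assms(3) ab an ne cons il ng that])
  have sg: "f [i \<mapsto> S] = committees k" if "0 < i" "S \<noteq> {}" for i and S :: "'c set"
  proof -
    have "\<forall>S' i. card S' = card S \<longrightarrow> 0 < i \<longrightarrow> S' \<noteq> {} \<longrightarrow> f [i \<mapsto> S'] = committees k"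
      by (rule singles_all[OF ab an ne cons il assms(3) assms(1) H])
    thus ?thesis using that by blast
  qed
  have "trivial_rule k f"
    unfolding trivial_rule_def
  proof (intro allI impI)
    fix P :: "'c profile" assume P: "is_profile P"
    have "{S::'c set. card S = k \<and> (undefined::'c) \<in> S} \<noteq> {}" by (rule Xw_ne) (use assms(2,3) in auto)
    then obtain W' :: "'c set" where "card W' = k" by blast
    hence W': "W' \<in> committees k" by (simp add: committees_def)
    have allS: "\<forall>i\<in>dom P. f [i \<mapsto> the (P i)] = committees k"
    proof
      fix i assume i: "i \<in> dom P"
      have "0 < i" using P i by (auto simp: is_profile_def intro: gr0I)
      moreover have "the (P i) \<noteq> {}" using P i by (auto simp: is_profile_def)
      ultimately show "f [i \<mapsto> the (P i)] = committees k" using sg by blast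
    qed
    have "f P = (\<Inter>i\<in>dom P. f [i \<mapsto> the (P i)])"
      by (rule cons_singles[OF cons P]) (use allS W' in auto)
    also have "\<dots> = committees k" using allS P by (auto simp: is_profile_def)
    finally show "f P = committees k" .
  qed
  thus False using assms(5) by blast
qed


end
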